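(* Let $S$ be a finite abelian semigroup with a zero element, its nonzero elements labelled $\lambda_i$, $i=0,\dots,N$, and $\lambda_{N+1}=0_S$; let $K_{i_1\cdots i_n}{}^{j}$ denote its $n$-selector restricted to indices $i_k,j\in\{0,\dots,N\}$. Let $\mathfrak g$ be a Lie superalgebra with basis $\{T_A\}$ and let $|T_{A_1}\cdots T_{A_n}|$ be an invariant tensor for $\mathfrak g$. Then for arbitrary constants $\alpha_j$, $$|T_{(A_1,i_1)}\cdots T_{(A_n,i_n)}|:=\sum_{j=0}^{N}\alpha_j K_{i_1\cdots i_n}{}^{j}\,|T_{A_1}\cdots T_{A_n}|$$ is an invariant tensor for the $0_S$-forced algebra obtained from $\mathfrak G=S\otimes\mathfrak g$.
   Context: A semigroup is a set with a closed associative multiplication; a zero element $0_S$ satisfies $0_S\lambda=\lambda0_S=0_S$ for all $\lambda\in S$. The $n$-selector $K_{\alpha_1\cdots\alpha_n}{}^{\gamma}$ equals $1$ if $\lambda_{\alpha_1}\cdots\lambda_{\alpha_n}=\lambda_\gamma$ and $0$ otherwise. If $\mathfrak g$ has basis $\{T_A\}$ with grading $\mathfrak q(A)$ and structure constants $C_{AB}{}^C$, the $0_S$-forced algebra of $S\otimes\mathfrak g$ is the vector space with basis $T_{(A,i)}$, $i=0,\dots,N$ (i.e. $\lambda_iT_A$ with the generators $0_ST_A$ set to zero), grading $\mathfrak q(A,i)=\mathfrak q(A)$ and bracket $[T_{(A,i)},T_{(B,j)}]=\sum_{k=0}^N K_{ij}{}^{k}C_{AB}{}^{C}T_{(C,k)}$.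 A rank-$n$ tensor $|T_{A_1}\cdots T_{A_n}|$ on a Lie superalgebra with structure constants $C_{AB}{}^C$ is invariant if for all $A_0,\dots,A_n$: $\sum_{p=1}^{n}(-1)^{\mathfrak q(A_0)(\mathfrak q(A_1)+\cdots+\mathfrak q(A_{p-1}))}C_{A_0A_p}{}^{B}|T_{A_1}\cdots T_{A_{p-1}}T_BT_{A_{p+1}}\cdots T_{A_n}|=0$. *)

theory Defs
  imports Main
begin

definition abelian_semigroup_with_zero :: "('s \<Rightarrow> 's \<Rightarrow> 's) \<Rightarrow> 's \<Rightarrow> bool" where
  "abelian_semigroup_with_zero mul z \<longleftrightarrow>
     (\<forall>x y w. mul (mul x y) w = mul x (mul y w)) \<and>
     (\<forall>x y. mul x y = mul y x) \<and>
     (\<forall>x. mul z x = z \<and> mul x z = z)"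

definition sg_prod :: "('s \<Rightarrow> 's \<Rightarrow> 's) \<Rightarrow> 's list \<Rightarrow> 's" where
  "sg_prod mul xs = foldl mul (hd xs) (tl xs)"

definition selector :: "('s \<Rightarrow> 's \<Rightarrow> 's) \<Rightarrow> 's list \<Rightarrow> 's \<Rightarrow> 'k::zero_neq_one" where
  "selector mul xs g = (if sg_prod mul xs = g then 1 else 0)"

text \<open>Lie superalgebra given by structure constants C A B E (i.e. [T_A,T_B] = sum_E C A B E T_E)
  on a finite basis with Z_2-grading q (values 0 or 1).\<close>
definition lie_superalgebra :: "('a::finite \<Rightarrow> nat) \<Rightarrow> ('a \<Rightarrow> 'a \<Rightarrow> 'a \<Rightarrow> 'k::field) \<Rightarrow> bool" where
  "lie_superalgebra q C \<longleftrightarrow>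
     (\<forall>A. q A \<in> {0, 1}) \<and>
     (\<forall>A B E. C A B E \<noteq> 0 \<longrightarrow> q E = (q A + q B) mod 2) \<and>
     (\<forall>A B E. C A B E = - ((-1) ^ (q A * q B)) * C B A E) \<and>
     (\<forall>A B D F.
        (-1) ^ (q A * q D) * (\<Sum>E\<in>UNIV. C B D E * C A E F)
      + (-1) ^ (q B * q A) * (\<Sum>E\<in>UNIV. C D A E * C B E F)
      + (-1) ^ (q D * q B) * (\<Sum>E\<in>UNIV. C A B E * C D E F) = 0)"

text \<open>Invariance of a rank-n tensor t (a function on length-n lists of basis indices from
  the basis set Bs) for the algebra with grading q and structure constants C.\<close>
definition invariant_tensor ::
  "'b set \<Rightarrow> ('b \<Rightarrow> nat) \<Rightarrow> ('b \<Rightarrow> 'b \<Rightarrow> 'b \<Rightarrow> 'k::comm_ring_1) \<Rightarrow> nat \<Rightarrow> ('b list \<Rightarrow> 'k) \<Rightarrow> bool" where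
  "invariant_tensor Bs q C n t \<longleftrightarrow>
     (\<forall>A0\<in>Bs. \<forall>As. length As = n \<longrightarrow> set As \<subseteq> Bs \<longrightarrow>
        (\<Sum>p<n. (-1) ^ (q A0 * (\<Sum>k<p. q (As ! k))) *
                 (\<Sum>B\<in>Bs. C A0 (As ! p) B * t (As[p := B]))) = 0)"

text \<open>0_S-forced algebra of S \<otimes> g: basis (A,i) with i a nonzero element of S.\<close>
definition forced_basis :: "'s \<Rightarrow> ('a \<times> 's) set" where
  "forced_basis z = UNIV \<times> {i. i \<noteq> z}"

definition forced_grading :: "('a \<Rightarrow> nat) \<Rightarrow> ('a \<times> 's) \<Rightarrow> nat" where
  "forced_grading q Ai = q (fst Ai)"

definition forced_constants ::
  "('s \<Rightarrow> 's \<Rightarrow> 's) \<Rightarrow> ('a \<Rightarrow> 'a \<Rightarrow> 'a \<Rightarrow> 'k::field) \<Rightarrow> ('a \<times> 's) \<Rightarrow> ('a \<times> 's) \<Rightarrow> ('a \<times> 's) \<Rightarrow> 'k" where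
  "forced_constants mul C Ai Bj Ck = selector mul [snd Ai, snd Bj] (snd Ck) * C (fst Ai) (fst Bj) (fst Ck)"

definition induced_tensor ::
  "('s \<Rightarrow> 's \<Rightarrow> 's) \<Rightarrow> 's \<Rightarrow> ('s \<Rightarrow> 'k::field) \<Rightarrow> ('a list \<Rightarrow> 'k) \<Rightarrow> ('a \<times> 's) list \<Rightarrow> 'k" where
  "induced_tensor mul z \<alpha> t Ais =
     (\<Sum>j\<in>{j. j \<noteq> z}. \<alpha> j * selector mul (map snd Ais) j * t (map fst Ais))"

end

theory Submission
  imports Defs
begin

lemma foldl_assoc_front:
  assumes "abelian_semigroup_with_zero mul z"
  shows "foldl mul (mul a x) xs = mul a (foldl mul x xs)"
proof (induction xs arbitrary: x)
  case Nil then show ?case by simp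
next
  case (Cons y ys)
  have "mul (mul a x) y = mul a (mul x y)" using assms unfolding abelian_semigroup_with_zero_def by metis
  then show ?case using Cons by simp
qed

lemma foldl_upd:
  assumes "abelian_semigroup_with_zero mul z" "p < length xs"
  shows "foldl mul x (xs[p := mul a (xs!p)]) = mul a (foldl mul x xs)"
  using assms(2)
proof (induction xs arbitrary: x p)
  case Nil then show ?case by simp
next
  case (Cons y ys)
  have A: "\<forall>x y w. mul (mul x y) w = mul x (mul y w)" and Cm: "\<forall>x y. mul x y = mul y x"
    using assms(1) by (auto simp: abelian_semigroup_with_zero_def)
  show ?case
  proof (cases p)
    case 0
    have "mul x (mul a y) = mul a (mul x y)" using A Cm by metis
    then show ?thesis using 0 foldl_assoc_front[OF assms(1)] by simp
  next
    case (Suc p')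
    then show ?thesis using Cons by simp
  qed
qed

lemma sg_prod_upd:
  assumes "abelian_semigroup_with_zero mul z" "p < length xs"
  shows "sg_prod mul (xs[p := mul a (xs!p)]) = mul a (sg_prod mul xs)"
proof (cases xs)
  case Nil then show ?thesis using assms by simp
next
  case (Cons y ys)
  show ?thesis
  proof (cases p)
    case 0
    then show ?thesis using Cons foldl_assoc_front[OF assms(1)] by (simp add: sg_prod_def)
  next
    case (Suc p')
    then show ?thesis using Cons assms foldl_upd[OF assms(1), of p' ys y a] by (simp add: sg_prod_def)
  qed
qed

lemma foldl_zero:
  assumes "abelian_semigroup_with_zero mul z"
  shows "foldl mul z xs = z"
  using assms by (induction xs) (auto simp: abelian_semigroup_with_zero_def)

lemma foldl_upd_zero:
  assumes "abelian_semigroup_with_zero mul z" "p < length xs"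
  shows "foldl mul x (xs[p := z]) = z"
  using assms(2)
proof (induction xs arbitrary: x p)
  case Nil then show ?case by simp
next
  case (Cons y ys)
  show ?case
  proof (cases p)
    case 0
    then show ?thesis using foldl_zero[OF assms(1)] assms(1)
      by (simp add: abelian_semigroup_with_zero_def)
  next
    case (Suc p')
    then show ?thesis using Cons by simp
  qed
qed

lemma sg_prod_upd_zero:
  assumes "abelian_semigroup_with_zero mul z" "p < length xs"
  shows "sg_prod mul (xs[p := z]) = z"
proof (cases xs)
  case Nil then show ?thesis using assms by simp
next
  case (Cons y ys)
  show ?thesis
  proof (cases p)
    case 0
    then show ?thesis using Cons foldl_zero[OF assms(1)] by (simp add: sg_prod_def)
  next
    case (Suc p')
    then show ?thesis using Cons assms foldl_upd_zero[OF assms(1), of p' ys y] by (simp add: sg_prod_def)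
  qed
qed

lemma key:
  fixes mul :: "'s::finite \<Rightarrow> 's \<Rightarrow> 's"
  assumes asg: "abelian_semigroup_with_zero mul z" and j: "j \<noteq> z" and p: "p < length xs"
  shows "(\<Sum>k\<in>{k. k \<noteq> z}. selector mul [a, xs!p] k * selector mul (xs[p:=k]) j :: 'k::comm_ring_1)
        = (if mul a (sg_prod mul xs) = j then 1 else 0)"
proof (cases "mul a (xs!p) = z")
  case True
  have "selector mul [a, xs!p] k = (0::'k)" if "k \<noteq> z" for k
    using True that by (simp add: selector_def sg_prod_def)
  then have L: "(\<Sum>k\<in>{k. k \<noteq> z}. selector mul [a, xs!p] k * selector mul (xs[p:=k]) j :: 'k) = 0"
    by simp
  have "mul a (sg_prod mul xs) = z"
    using sg_prod_upd[OF asg p, of a] sg_prod_upd_zero[OF asg p] True by simp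
  then show ?thesis using L j by simp
next
  case False
  have "(\<Sum>k\<in>{k. k \<noteq> z}. selector mul [a, xs!p] k * selector mul (xs[p:=k]) j :: 'k)
      = (\<Sum>k\<in>{k. k \<noteq> z}. if mul a (xs!p) = k then selector mul (xs[p:=k]) j else 0)"
    by (rule sum.cong) (auto simp: selector_def sg_prod_def)
  also have "\<dots> = selector mul (xs[p:=mul a (xs!p)]) j"
    using False by (simp add: sum.delta)
  also have "\<dots> = (if mul a (sg_prod mul xs) = j then 1 else 0)"
    using sg_prod_upd[OF asg p] by (simp add: selector_def)
  finally show ?thesis .
qed

theorem theorem4:
  fixes mul :: "'s::finite \<Rightarrow> 's \<Rightarrow> 's" and z :: 's
    and q :: "'a::finite \<Rightarrow> nat" and C :: "'a \<Rightarrow> 'a \<Rightarrow> 'a \<Rightarrow> 'k::field"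
    and n :: nat and t :: "'a list \<Rightarrow> 'k" and \<alpha> :: "'s \<Rightarrow> 'k"
  assumes "abelian_semigroup_with_zero mul z"
    and "\<exists>x. x \<noteq> z"
    and "lie_superalgebra q C"
    and "n \<ge> 1"
    and "invariant_tensor UNIV q C n t"
  shows "invariant_tensor (forced_basis z) (forced_grading q) (forced_constants mul C) n
           (induced_tensor mul z \<alpha> t)"
  unfolding invariant_tensor_def
proof (intro ballI allI impI)
  fix A0 :: "'a \<times> 's" and As
  assume A0: "A0 \<in> forced_basis z" and len: "length (As :: ('a \<times> 's) list) = n"
    and sub: "set As \<subseteq> forced_basis z"
  obtain a0 i0 where A0e: "A0 = (a0, i0)" by (cases A0)
  define as where "as = map fst As"
  define iss where "iss = map snd As"
  define K where "K = {k::'s. k \<noteq> z}"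
  define c where "c = (\<Sum>j\<in>K. \<alpha> j * (if mul i0 (sg_prod mul iss) = j then 1 else 0))"
  have lenas: "length as = n" and lenis: "length iss = n" using len by (auto simp: as_def iss_def)
  have inv: "(\<Sum>p<n. (-1) ^ (q a0 * (\<Sum>k<p. q (as ! k))) *
                 (\<Sum>b\<in>UNIV. C a0 (as ! p) b * t (as[p := b]))) = 0"
    using assms(5) lenas unfolding invariant_tensor_def by auto
  have step: "(\<Sum>B\<in>forced_basis z. forced_constants mul C A0 (As ! p) B * induced_tensor mul z \<alpha> t (As[p := B]))
      = c * (\<Sum>b\<in>UNIV. C a0 (as ! p) b * t (as[p := b]))" if p: "p < n" for p
  proof -
    have asp: "fst (As!p) = as!p" and isp: "snd (As!p) = iss!p" using p len by (auto simp: as_def iss_def)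
    have "(\<Sum>B\<in>forced_basis z. forced_constants mul C A0 (As ! p) B * induced_tensor mul z \<alpha> t (As[p := B]))
       = (\<Sum>b\<in>UNIV. \<Sum>k\<in>K. forced_constants mul C A0 (As ! p) (b,k) * induced_tensor mul z \<alpha> t (As[p := (b,k)]))"
      unfolding forced_basis_def K_def by (simp add: sum.cartesian_product)
    also have "\<dots> = (\<Sum>b\<in>UNIV. \<Sum>k\<in>K. \<Sum>j\<in>K. C a0 (as ! p) b * t (as[p := b]) * (\<alpha> j *
                (selector mul [i0, iss!p] k * selector mul (iss[p:=k]) j)))"
    proof (intro sum.cong refl)
      fix b k
      have e1: "forced_constants mul C A0 (As ! p) (b,k) = selector mul [i0, iss!p] k * C a0 (as!p) b"
        by (simp add: forced_constants_def A0e asp isp)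
      have e2: "induced_tensor mul z \<alpha> t (As[p := (b,k)]) = (\<Sum>j\<in>K. \<alpha> j * selector mul (iss[p:=k]) j * t (as[p:=b]))"
        by (simp add: induced_tensor_def map_update as_def iss_def K_def)
      show "forced_constants mul C A0 (As ! p) (b,k) * induced_tensor mul z \<alpha> t (As[p := (b,k)])
          = (\<Sum>j\<in>K. C a0 (as ! p) b * t (as[p := b]) * (\<alpha> j *
                (selector mul [i0, iss!p] k * selector mul (iss[p:=k]) j)))"
        unfolding e1 e2 sum_distrib_left by (rule sum.cong) (simp_all add: mult_ac)
    qed
    also have "\<dots> = (\<Sum>b\<in>UNIV. C a0 (as ! p) b * t (as[p := b]) * (\<Sum>j\<in>K. \<alpha> j *
                (\<Sum>k\<in>K. selector mul [i0, iss!p] k * selector mul (iss[p:=k]) j)))"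
    proof (intro sum.cong refl)
      fix b
      show "(\<Sum>k\<in>K. \<Sum>j\<in>K. C a0 (as ! p) b * t (as[p := b]) * (\<alpha> j *
                (selector mul [i0, iss!p] k * selector mul (iss[p:=k]) j))) =
            C a0 (as ! p) b * t (as[p := b]) * (\<Sum>j\<in>K. \<alpha> j *
                (\<Sum>k\<in>K. selector mul [i0, iss!p] k * selector mul (iss[p:=k]) j))"
        apply (subst sum.swap)
        apply (simp only: sum_distrib_left)
        done
    qed
    also have "\<dots> = (\<Sum>b\<in>UNIV. C a0 (as ! p) b * t (as[p := b]) * c)"
      unfolding c_def
    proof (intro sum.cong refl arg_cong2[where f="(*)"])
      fix j assume "j \<in> K"
      then have "j \<noteq> z" by (simp add: K_def)
      moreover have pl: "p < length iss" using p lenis by simp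
      ultimately show "(\<Sum>k\<in>K. selector mul [i0, iss!p] k * selector mul (iss[p:=k]) j) = (if mul i0 (sg_prod mul iss) = j then 1 else (0::'k))"
        unfolding K_def by (rule key[OF assms(1)])
    qed
    finally show ?thesis by (simp only: sum_distrib_left mult.commute)
  qed
  have "(\<Sum>p<n. (-1) ^ (forced_grading q A0 * (\<Sum>k<p. forced_grading q (As ! k))) *
          (\<Sum>B\<in>forced_basis z. forced_constants mul C A0 (As ! p) B * induced_tensor mul z \<alpha> t (As[p := B])))
      = (\<Sum>p<n. c * ((-1) ^ (q a0 * (\<Sum>k<p. q (as ! k))) *
                 (\<Sum>b\<in>UNIV. C a0 (as ! p) b * t (as[p := b]))))"
  proof (intro sum.cong refl)
    fix p assume "p \<in> {..<n}"
    then have p: "p < n" by simp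
    have g: "(\<Sum>k<p. forced_grading q (As ! k)) = (\<Sum>k<p. q (as ! k))"
      using p len by (intro sum.cong refl) (simp add: forced_grading_def as_def)
    show "(-1) ^ (forced_grading q A0 * (\<Sum>k<p. forced_grading q (As ! k))) *
          (\<Sum>B\<in>forced_basis z. forced_constants mul C A0 (As ! p) B * induced_tensor mul z \<alpha> t (As[p := B]))
      = c * ((-1) ^ (q a0 * (\<Sum>k<p. q (as ! k))) *
                 (\<Sum>b\<in>UNIV. C a0 (as ! p) b * t (as[p := b])))"
      unfolding step[OF p] g by (simp add: forced_grading_def A0e mult_ac)
  qed
  also have "\<dots> = 0" using inv by (simp add: sum_distrib_left[symmetric])
  finally show "(\<Sum>p<n. (-1) ^ (forced_grading q A0 * (\<Sum>k<p. forced_grading q (As ! k))) *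
          (\<Sum>B\<in>forced_basis z. forced_constants mul C A0 (As ! p) B * induced_tensor mul z \<alpha> t (As[p := B]))) = 0" .
qed

end
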